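(* Let $p,k\ge 1$ be integers, let $a_1,\dots,a_k\in\mathbb{R}$, and let $\mathbf{f}:\mathbb{R}^p\to\mathbb{R}^p$ be a differentiable flux. Let $\mathbb{M}_1,\dots,\mathbb{M}_k:\mathbb{R}^p\to\mathbb{R}^p$ be differentiable maps satisfying, for all $\mathbf{u}$, $\sum_{i=1}^k \mathbb{M}_i(\mathbf{u})=\mathbf{u}$ and $\sum_{i=1}^k a_i\mathbb{M}_i(\mathbf{u})=\mathbf{f}(\mathbf{u})$, and set $\mathbf{m}_2(\mathbf{u})=\sum_{i=1}^k a_i^2\mathbb{M}_i(\mathbf{u})$. Fix $\mathbf{u}$ and suppose there exists a strictly convex entropy $\eta(\mathbf{u})$ with Hessian matrix $\mathbf{A}_0$ such that (1) $\mathbf{A}_0\mathbf{f}'(\mathbf{u})$ is symmetric, (2) $\mathbf{A}_0\mathbb{M}_i'(\mathbf{u})$ is symmetric positive definite for all $i$, and (3) $\min_i|a_i|>\rho(\mathbf{f}'(\mathbf{u}))$ (spectral radius). Let $\mathbf{D}=\mathbf{D}(\mathbf{u})$ be a $p\times p$ matrix and assume that $\mathbf{D}\mathbf{A}_0^{-1}$ is symmetric and has positive eigenvalues. Let $\varepsilon>0$, $\omega>0$, and define the $p\times p$ matrix $\varepsilon\tilde{\Omega}^{-1}$ by $$\varepsilon\,\omega\,\tilde{\Omega}^{-1}=\mathbf{D}(\mathbf{u})\left[\mathbf{m}_2'(\mathbf{u})-(\mathbf{f}'(\mathbf{u}))^2\right]^{-1}.$$ Then $\varepsilon\tilde{\Omega}^{-1}$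 has real non-negative eigenvalues.
   Context: Primes denote Jacobian matrices with respect to $\mathbf{u}$. Here $\mathbf{D}$ is the diffusion matrix of the target convection-diffusion system $\partial_t\mathbf{u}+\partial_x\mathbf{f}(\mathbf{u})=\partial_x(\mathbf{D}\partial_x\mathbf{u})$, $\tilde{\Omega}$ is the block of the collision matrix $\Omega=\mathbf{I}_k\otimes\tilde{\Omega}$ of the kinetic model, $\varepsilon$ is the Knudsen number and $\omega=\ell/\|\Lambda\|$ with $\ell$ a characteristic length. Under the stated hypotheses $\mathbf{m}_2'(\mathbf{u})-(\mathbf{f}'(\mathbf{u}))^2$ is invertible, so the defining relation makes sense. *)

theory Defs
  imports "HOL-Analysis.Analysis"
begin

definition strictly_convex_on :: "'a::real_vector set \<Rightarrow> ('a \<Rightarrow> real) \<Rightarrow> bool" where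
  "strictly_convex_on S g \<longleftrightarrow> convex S \<and>
     (\<forall>x\<in>S. \<forall>y\<in>S. x \<noteq> y \<longrightarrow> (\<forall>t::real. 0 < t \<and> t < 1 \<longrightarrow>
        g ((1 - t) *\<^sub>R x + t *\<^sub>R y) < (1 - t) * g x + t * g y))"

definition gradient_vec :: "(real^'n \<Rightarrow> real) \<Rightarrow> real^'n \<Rightarrow> real^'n" where
  "gradient_vec g v = (\<chi> j. frechet_derivative g (at v) (axis j 1))"

definition hessian :: "(real^'n \<Rightarrow> real) \<Rightarrow> real^'n \<Rightarrow> real^'n^'n" where
  "hessian g v = jacobian (gradient_vec g) (at v)"

definition cmat :: "real^'n^'m \<Rightarrow> complex^'n^'m" where
  "cmat A = (\<chi> i j. complex_of_real (A $ i $ j))"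

definition is_eigenvalue :: "real^'n^'n \<Rightarrow> complex \<Rightarrow> bool" where
  "is_eigenvalue A lam \<longleftrightarrow> (\<exists>v::complex^'n. v \<noteq> 0 \<and> cmat A *v v = lam *s v)"

definition spectral_radius :: "real^'n^'n \<Rightarrow> real" where
  "spectral_radius A = Sup {cmod lam | lam. is_eigenvalue A lam}"

definition sym_mat :: "real^'n^'n \<Rightarrow> bool" where
  "sym_mat A \<longleftrightarrow> transpose A = A"

definition pos_def_sym :: "real^'n^'n \<Rightarrow> bool" where
  "pos_def_sym A \<longleftrightarrow> sym_mat A \<and> (\<forall>x. x \<noteq> 0 \<longrightarrow> x \<bullet> (A *v x) > 0)"

end

theory Submission
  imports Defs
begin

lemma minv:
  fixes A :: "real^'n^'n"
  assumes "invertible A"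
  shows "A ** matrix_inv A = mat 1" "matrix_inv A ** A = mat 1"
proof -
  have "A ** matrix_inv A = mat 1 \<and> matrix_inv A ** A = mat 1"
    using assms unfolding matrix_inv_def invertible_def by (rule someI_ex)
  then show "A ** matrix_inv A = mat 1" "matrix_inv A ** A = mat 1" by auto
qed

lemma jac_eq:
  fixes g :: "real^'n \<Rightarrow> real^'m"
  assumes "(g has_derivative (\<lambda>h. L *v h)) (at x)"
  shows "jacobian g (at x) = L"
  using frechet_derivative_at[OF assms] unfolding jacobian_def
  by (metis matrix_of_matrix_vector_mul)

lemma sum_mv: "(\<Sum>i\<in>I. X i) *v (y::real^'n) = (\<Sum>i\<in>I. X i *v y)"
  by (induction I rule: infinite_finite_induct) (auto simp: algebra_simps)

lemma scaleR_mv: "(c *\<^sub>R X) *v (y::real^'n) = c *\<^sub>R (X *v y)"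
  by (simp add: scaleR_matrix_vector_assoc)

lemma jac_sum:
  fixes M :: "nat \<Rightarrow> real^'n \<Rightarrow> real^'n"
  assumes "\<And>i. i < k \<Longrightarrow> M i differentiable (at u)"
  shows "jacobian (\<lambda>v. \<Sum>i<k. c i *\<^sub>R M i v) (at u) = (\<Sum>i<k. c i *\<^sub>R jacobian (M i) (at u))"
proof (rule jac_eq)
  have "((\<lambda>v. \<Sum>i<k. c i *\<^sub>R M i v) has_derivative (\<lambda>h. \<Sum>i<k. c i *\<^sub>R (jacobian (M i) (at u) *v h))) (at u)"
    apply (rule has_derivative_sum)
    apply (rule has_derivative_scaleR_right)
    using assms jacobian_works by blast
  then show "((\<lambda>v. \<Sum>i<k. c i *\<^sub>R M i v) has_derivative (\<lambda>h. (\<Sum>i<k. c i *\<^sub>R jacobian (M i) (at u)) *v h)) (at u)"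
    by (simp add: sum_mv scaleR_mv)
qed

lemma sum_transpose: "transpose (\<Sum>i\<in>I. X i) = (\<Sum>i\<in>I. transpose (X i :: real^'n^'n))"
  by (induction I rule: infinite_finite_induct) (auto simp: transpose_def vec_eq_iff)

lemma sum_mm: "(Y::real^'n^'n) ** (\<Sum>i\<in>I. X i) = (\<Sum>i\<in>I. Y ** X i)"
  by (induction I rule: infinite_finite_induct) (auto simp: matrix_add_ldistrib)

lemma sym_form: "sym_mat M \<Longrightarrow> x \<bullet> (M *v y) = y \<bullet> (M *v (x::real^'n))"
  unfolding sym_mat_def
  by (metis dot_lmul_matrix inner_commute transpose_matrix_vector)

lemma transp_form: "x \<bullet> (M *v y) = (transpose M *v x) \<bullet> (y::real^'n)"
  by (metis dot_lmul_matrix transpose_matrix_vector)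


definition cvec :: "real^'n \<Rightarrow> complex^'n" where
  "cvec x = (\<chi> i. complex_of_real (x $ i))"

lemma cmat_cvec: "cmat M *v cvec x = cvec (M *v x)"
  by (simp add: cmat_def cvec_def matrix_vector_mult_def vec_eq_iff)

lemma real_eig:
  assumes "x \<noteq> 0" "M *v x = c *\<^sub>R x"
  shows "is_eigenvalue M (complex_of_real c)"
  unfolding is_eigenvalue_def
proof (intro exI conjI)
  show "cvec x \<noteq> 0" using assms(1) by (auto simp: cvec_def vec_eq_iff)
  show "cmat M *v cvec x = complex_of_real c *s cvec x"
    using assms(2) unfolding cmat_cvec by (simp add: cvec_def vec_eq_iff)
qed

lemma eig_bound:
  assumes "is_eigenvalue M lam"
  shows "cmod lam \<le> (\<Sum>j\<in>UNIV. \<Sum>l\<in>UNIV. \<bar>M $ j $ l\<bar>)"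
proof -
  obtain v where v: "v \<noteq> 0" "cmat M *v v = lam *s v" using assms is_eigenvalue_def by blast
  obtain j where j: "\<And>l. cmod (v $ l) \<le> cmod (v $ j)"
  proof -
    have "finite ((\<lambda>l. cmod (v $ l)) ` UNIV)" by simp
    then have "Max ((\<lambda>l. cmod (v $ l)) ` UNIV) \<in> ((\<lambda>l. cmod (v $ l)) ` UNIV)"
      by (intro Max_in) auto
    then obtain j where "Max ((\<lambda>l. cmod (v $ l)) ` UNIV) = cmod (v $ j)" by (metis imageE)
    then show ?thesis using that by (metis Max_ge finite UNIV_I finite_imageI image_eqI)
  qed
  have vj: "v $ j \<noteq> 0"
  proof
    assume "v $ j = 0"
    then have "\<And>l. v $ l = 0" using j by (metis norm_le_zero_iff norm_zero)
    then show False using v(1) by (simp add: vec_eq_iff)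
  qed
  have "lam * v $ j = (\<Sum>l\<in>UNIV. complex_of_real (M $ j $ l) * v $ l)"
    using arg_cong[OF v(2), of "\<lambda>w. w $ j"] by (simp add: matrix_vector_mult_def cmat_def)
  then have "cmod lam * cmod (v $ j) \<le> (\<Sum>l\<in>UNIV. \<bar>M $ j $ l\<bar> * cmod (v $ l))"
    by (metis (no_types, lifting) norm_mult norm_of_real norm_sum sum.cong)
  also have "\<dots> \<le> (\<Sum>l\<in>UNIV. \<bar>M $ j $ l\<bar> * cmod (v $ j))"
    by (intro sum_mono mult_left_mono j) auto
  also have "\<dots> = (\<Sum>l\<in>UNIV. \<bar>M $ j $ l\<bar>) * cmod (v $ j)" by (simp add: sum_distrib_right)
  finally have "cmod lam \<le> (\<Sum>l\<in>UNIV. \<bar>M $ j $ l\<bar>)" using vj by simp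
  also have "\<dots> \<le> (\<Sum>j\<in>UNIV. \<Sum>l\<in>UNIV. \<bar>M $ j $ l\<bar>)"
    by (rule member_le_sum) (auto intro: sum_nonneg)
  finally show ?thesis .
qed

lemma le_spec:
  assumes "is_eigenvalue M lam"
  shows "cmod lam \<le> spectral_radius M"
  unfolding spectral_radius_def
  by (rule cSup_upper) (use assms eig_bound in \<open>auto intro!: bdd_aboveI\<close>)

lemma eig_scale:
  assumes "is_eigenvalue (c *\<^sub>R M) lam" "c \<noteq> 0"
  shows "is_eigenvalue M (lam / complex_of_real c)"
proof -
  obtain v where v: "v \<noteq> 0" "cmat (c *\<^sub>R M) *v v = lam *s v" using assms is_eigenvalue_def by blast
  have "cmat (c *\<^sub>R M) *v v = complex_of_real c *s (cmat M *v v)"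
    by (simp add: cmat_def matrix_vector_mult_def vec_eq_iff sum_distrib_left algebra_simps)
  with v(2) have "cmat M *v v = (lam / complex_of_real c) *s v"
    using assms(2) by (auto simp: vec_eq_iff field_simps)
  then show ?thesis using v(1) is_eigenvalue_def by blast
qed


lemma psd_zero:
  fixes c d :: real
  assumes "\<And>t. 0 \<le> 2 * t * c + t\<^sup>2 * d"
  shows "c = 0"
proof -
  have d: "d \<ge> 0" using assms[of 1] assms[of "-1"] by (simp add: power2_eq_square)
  define t where "t = - c / (d + 1)"
  have dp: "d + 1 > 0" using d by simp
  have e: "t * (d+1) = -c" using dp by (simp add: t_def)
  have "0 \<le> (2 * t * c + t\<^sup>2 * d) * (d+1)\<^sup>2" using assms[of t] by (intro mult_nonneg_nonneg) simp_all
  also have "(2 * t * c + t\<^sup>2 * d) * (d+1)\<^sup>2 = 2*c*(t*(d+1))*(d+1) + (t*(d+1))\<^sup>2*d"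
    by (simp add: power2_eq_square algebra_simps)
  also have "\<dots> = c\<^sup>2 * (- d - 2)" unfolding e by (simp add: power2_eq_square algebra_simps)
  finally have "0 \<le> c\<^sup>2 * (- d - 2)" .
  then have "c\<^sup>2 * (d + 2) \<le> 0" by (simp add: algebra_simps)
  then have "c\<^sup>2 \<le> 0" using d by (simp add: mult_le_0_iff)
  then show ?thesis by simp
qed

lemma sym_pos_eig_pd:
  fixes P :: "real^'n^'n"
  assumes sym: "sym_mat P"
    and eig: "\<And>lam. is_eigenvalue P lam \<Longrightarrow> Im lam = 0 \<and> Re lam > 0"
    and x: "x \<noteq> 0"
  shows "x \<bullet> (P *v x) > 0"
proof -
  define f where "f = (\<lambda>x::real^'n. x \<bullet> (P *v x))"
  have cont: "continuous_on (sphere 0 1) f" unfolding f_def by (intro continuous_intros)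
  obtain x0 where x0: "x0 \<in> sphere 0 1" "\<And>y. y \<in> sphere 0 1 \<Longrightarrow> f x0 \<le> f y"
    using continuous_attains_inf[OF compact_sphere _ cont] by auto
  define m where "m = f x0"
  have x0n: "x0 \<bullet> x0 = 1" using x0(1) by (simp add: dot_square_norm)
  have lower: "m * (y \<bullet> y) \<le> f y" for y
  proof (cases "y = 0")
    case True then show ?thesis by (simp add: f_def)
  next
    case False
    define z where "z = (1 / norm y) *\<^sub>R y"
    have "z \<in> sphere 0 1" using False by (simp add: z_def)
    then have "m \<le> f z" using x0 m_def by auto
    also have "f z = f y / (norm y)\<^sup>2"
      by (simp add: f_def z_def matrix_vector_mult_scaleR power2_eq_square)
    finally have "m * (norm y)\<^sup>2 \<le> f y" using False by (simp add: field_simps)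
    then show ?thesis by (simp add: power2_norm_eq_inner)
  qed
  define y where "y = P *v x0 - m *\<^sub>R x0"
  have "y \<bullet> y = 0"
  proof (rule psd_zero)
    fix t :: real
    have "0 \<le> f (x0 + t *\<^sub>R y) - m * ((x0 + t *\<^sub>R y) \<bullet> (x0 + t *\<^sub>R y))"
      using lower by simp
    also have "f (x0 + t *\<^sub>R y) = f x0 + 2 * t * (y \<bullet> (P *v x0)) + t\<^sup>2 * f y"
      using sym_form[OF sym, of x0 y]
      by (simp add: f_def algebra_simps inner_add_left inner_add_right power2_eq_square inner_commute)
    also have "(x0 + t *\<^sub>R y) \<bullet> (x0 + t *\<^sub>R y) = 1 + 2 * t * (y \<bullet> x0) + t\<^sup>2 * (y \<bullet> y)"
      using x0n by (simp add: algebra_simps inner_add_left inner_add_right power2_eq_square inner_commute)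
    finally have "0 \<le> 2 * t * (y \<bullet> (P *v x0) - m * (y \<bullet> x0)) + t\<^sup>2 * (f y - m * (y \<bullet> y))"
      unfolding m_def by (simp add: algebra_simps)
    also have "y \<bullet> (P *v x0) - m * (y \<bullet> x0) = y \<bullet> y"
      by (simp add: y_def inner_diff_right)
    finally show "0 \<le> 2 * t * (y \<bullet> y) + t\<^sup>2 * (f y - m * (y \<bullet> y))" .
  qed
  then have "P *v x0 = m *\<^sub>R x0" by (simp add: y_def)
  moreover have "x0 \<noteq> 0" using x0n by auto
  ultimately have "is_eigenvalue P (complex_of_real m)" by (rule real_eig[rotated])
  then have "m > 0" using eig by fastforce
  moreover have "x \<bullet> x > 0" using x by simp
  ultimately have "0 < m * (x \<bullet> x)" by simp
  also have "\<dots> \<le> f x" by (rule lower)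
  finally show ?thesis by (simp add: f_def)
qed


definition hf :: "complex^'n \<Rightarrow> complex^'n \<Rightarrow> complex" where
  "hf w z = (\<Sum>i\<in>UNIV. cnj (w $ i) * z $ i)"

definition rv :: "complex^'n \<Rightarrow> real^'n" where "rv w = (\<chi> i. Re (w $ i))"
definition iv :: "complex^'n \<Rightarrow> real^'n" where "iv w = (\<chi> i. Im (w $ i))"

lemma cmat_mult: "cmat (A ** B) = cmat A ** cmat B"
  by (simp add: cmat_def matrix_matrix_mult_def vec_eq_iff)

lemma hf_scale: "hf w (c *s z) = c * hf w z"
  by (simp add: hf_def sum_distrib_left algebra_simps)

lemma hf_adj: "hf w (cmat M *v z) = hf (cmat (transpose M) *v w) z"
proof -
  have "hf w (cmat M *v z) = (\<Sum>i\<in>UNIV. \<Sum>j\<in>UNIV. cnj (w $ i) * (of_real (M $ i $ j) * z $ j))"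
    by (simp add: hf_def cmat_def matrix_vector_mult_def sum_distrib_left)
  also have "\<dots> = (\<Sum>j\<in>UNIV. \<Sum>i\<in>UNIV. cnj (w $ i) * (of_real (M $ i $ j) * z $ j))"
    by (rule sum.swap)
  also have "\<dots> = hf (cmat (transpose M) *v w) z"
    by (simp add: hf_def cmat_def matrix_vector_mult_def sum_distrib_right sum_distrib_left transpose_def algebra_simps)
  finally show ?thesis .
qed

lemma sym_entry: "sym_mat M \<Longrightarrow> M $ i $ j = M $ j $ i"
  unfolding sym_mat_def transpose_def by (metis vec_lambda_beta)

lemma hf_quad:
  fixes M :: "real^'n^'n"
  assumes "sym_mat M"
  shows "hf w (cmat M *v w) = complex_of_real (rv w \<bullet> (M *v rv w) + iv w \<bullet> (M *v iv w))"
proof -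
  let ?x = "rv w" and ?y = "iv w"
  have e: "hf w (cmat M *v w) = (\<Sum>i\<in>UNIV. \<Sum>j\<in>UNIV. cnj (w $ i) * (of_real (M $ i $ j) * w $ j))"
    by (simp add: hf_def cmat_def matrix_vector_mult_def sum_distrib_left)
  have re: "Re (hf w (cmat M *v w)) = (\<Sum>i\<in>UNIV. \<Sum>j\<in>UNIV. M $ i $ j * (?x $ i * ?x $ j + ?y $ i * ?y $ j))"
    unfolding e by (simp add: Re_sum rv_def iv_def algebra_simps)
  have "rv w \<bullet> (M *v rv w) + iv w \<bullet> (M *v iv w) = (\<Sum>i\<in>UNIV. \<Sum>j\<in>UNIV. M $ i $ j * (?x $ i * ?x $ j + ?y $ i * ?y $ j))"
    by (simp add: inner_vec_def matrix_vector_mult_def sum_distrib_left sum.distrib[symmetric] algebra_simps)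
  note re2 = this
  have im: "Im (hf w (cmat M *v w)) = (\<Sum>i\<in>UNIV. \<Sum>j\<in>UNIV. M $ i $ j * (?x $ i * ?y $ j)) - (\<Sum>i\<in>UNIV. \<Sum>j\<in>UNIV. M $ i $ j * (?y $ i * ?x $ j))"
    unfolding e by (simp add: Im_sum rv_def iv_def algebra_simps sum_subtractf)
  have "(\<Sum>i\<in>UNIV. \<Sum>j\<in>UNIV. M $ i $ j * (?y $ i * ?x $ j)) = (\<Sum>j\<in>UNIV. \<Sum>i\<in>UNIV. M $ i $ j * (?y $ i * ?x $ j))"
    by (rule sum.swap)
  also have "\<dots> = (\<Sum>i\<in>UNIV. \<Sum>j\<in>UNIV. M $ i $ j * (?x $ i * ?y $ j))"
    using sym_entry[OF assms] by (simp add: algebra_simps)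
  finally have "Im (hf w (cmat M *v w)) = 0" using im by simp
  then show ?thesis using re re2 by (simp add: complex_eq_iff)
qed

lemma rv_iv_zero: "rv w = 0 \<Longrightarrow> iv w = 0 \<Longrightarrow> w = 0"
  by (simp add: rv_def iv_def vec_eq_iff complex_eq_iff)

lemma pdpd_eig:
  fixes P Q :: "real^'n^'n"
  assumes sP: "sym_mat P" and pP: "\<And>x. x \<bullet> (P *v x) \<ge> 0"
    and sQ: "sym_mat Q" and pQ: "\<And>x. x \<noteq> 0 \<Longrightarrow> x \<bullet> (Q *v x) > 0"
    and ev: "is_eigenvalue (P ** Q) lam"
  shows "Im lam = 0 \<and> Re lam \<ge> 0"
proof -
  obtain v where v: "v \<noteq> 0" "cmat (P ** Q) *v v = lam *s v" using ev is_eigenvalue_def by blast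
  define w where "w = cmat Q *v v"
  have Pw: "cmat P *v w = lam *s v"
    using v(2) by (simp add: w_def cmat_mult matrix_vector_mul_assoc)
  define q1 where "q1 = rv v \<bullet> (Q *v rv v) + iv v \<bullet> (Q *v iv v)"
  define q2 where "q2 = rv w \<bullet> (P *v rv w) + iv w \<bullet> (P *v iv w)"
  have q2: "q2 \<ge> 0" unfolding q2_def using pP by (simp add: add_nonneg_nonneg)
  have q1: "q1 > 0"
  proof -
    have a: "rv v \<bullet> (Q *v rv v) \<ge> 0" "iv v \<bullet> (Q *v iv v) \<ge> 0"
      using pQ by (metis inner_zero_left less_eq_real_def)+
    have "rv v \<noteq> 0 \<or> iv v \<noteq> 0" using v(1) rv_iv_zero by blast
    then show ?thesis unfolding q1_def using a pQ by (metis add_pos_nonneg add_nonneg_pos)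
  qed
  have "complex_of_real q2 = hf w (cmat P *v w)" using hf_quad[OF sP] q2_def by simp
  also have "\<dots> = lam * hf w v" by (simp add: Pw hf_scale)
  also have "hf w v = hf v (cmat (transpose Q) *v v)"
    unfolding w_def hf_adj[of v "transpose Q"] by simp
  also have "\<dots> = complex_of_real q1"
    using sQ hf_quad[OF sQ] q1_def by (simp add: sym_mat_def)
  finally have "lam = complex_of_real (q2 / q1)" using q1
    by (simp add: field_simps)
  then show ?thesis using q1 q2 by simp
qed


lemma mv_sum: "(A::real^'n^'m) *v (\<Sum>i\<in>I. f i) = (\<Sum>i\<in>I. A *v f i)"
  by (induction I rule: infinite_finite_induct) (auto simp: algebra_simps)

lemma form_sym:
  fixes M :: "real^'n^'n"
  assumes "\<And>x y. x \<bullet> (M *v y) = y \<bullet> (M *v x)"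
  shows "sym_mat M"
proof -
  have e: "axis i 1 \<bullet> (M *v axis j 1) = M $ i $ j" for i j
    by (simp add: inner_axis' matrix_vector_mult_basis column_def)
  have "M $ j $ i = M $ i $ j" for i j
    using e[of j i] e[of i j] assms[of "axis j 1" "axis i 1"] by simp
  then show ?thesis unfolding sym_mat_def transpose_def vec_eq_iff by simp
qed

lemma core:
  fixes A0 J Jm :: "real^'n^'n" and Ji :: "nat \<Rightarrow> real^'n^'n" and a :: "nat \<Rightarrow> real"
  assumes k: "k \<ge> 1"
    and I: "(\<Sum>i<k. Ji i) = mat 1"
    and Jf: "J = (\<Sum>i<k. a i *\<^sub>R Ji i)"
    and Jm: "Jm = (\<Sum>i<k. (a i)\<^sup>2 *\<^sub>R Ji i)"
    and symf: "sym_mat (A0 ** J)"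
    and pd: "\<And>i. i < k \<Longrightarrow> pos_def_sym (A0 ** Ji i)"
    and sub: "Min ((\<lambda>i. \<bar>a i\<bar>) ` {..<k}) > spectral_radius J"
  shows "sym_mat A0" "sym_mat (A0 ** (Jm - J ** J))"
    "\<And>x. x \<noteq> 0 \<Longrightarrow> x \<bullet> ((A0 ** (Jm - J ** J)) *v x) > 0"
proof -
  define S where "S i = A0 ** Ji i" for i
  have symS: "\<And>i. i < k \<Longrightarrow> sym_mat (S i)" using pd by (simp add: S_def pos_def_sym_def)
  have pdS: "\<And>i x. i < k \<Longrightarrow> x \<noteq> 0 \<Longrightarrow> x \<bullet> (S i *v x) > 0" using pd by (simp add: S_def pos_def_sym_def)
  have A0s: "A0 = (\<Sum>i<k. S i)"
  proof -
    have "A0 = A0 ** (\<Sum>i<k. Ji i)" by (simp add: I)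
    also have "\<dots> = (\<Sum>i<k. S i)" by (simp add: sum_mm S_def)
    finally show ?thesis .
  qed
  show symA: "sym_mat A0"
  proof -
    have "transpose A0 = (\<Sum>i<k. transpose (S i))" by (subst A0s) (simp add: sum_transpose)
    also have "\<dots> = (\<Sum>i<k. S i)" using symS by (intro sum.cong refl) (simp add: sym_mat_def)
    finally show ?thesis using A0s by (simp add: sym_mat_def)
  qed
  define T where "T = A0 ** J"
  have Ty: "T *v z = (\<Sum>i<k. a i *\<^sub>R (S i *v z))" for z
    by (simp add: T_def Jf S_def sum_mv scaleR_mv mv_sum matrix_vector_mul_assoc[symmetric] matrix_vector_mult_scaleR)
  have Jmy: "A0 *v (Jm *v z) = (\<Sum>i<k. (a i)\<^sup>2 *\<^sub>R (S i *v z))" for z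
    by (simp add: Jm S_def sum_mv scaleR_mv mv_sum matrix_vector_mul_assoc[symmetric] matrix_vector_mult_scaleR)
  have A0y: "A0 *v z = (\<Sum>i<k. S i *v z)" for z
    by (subst A0s) (simp add: sum_mv)
  have symT: "sym_mat T" using symf T_def by simp
  have SS: "A0 ** (Jm - J ** J) *v x = A0 *v (Jm *v x) - T *v (J *v x)" for x
    unfolding T_def matrix_vector_mul_assoc[symmetric] matrix_vector_mult_diff_rdistrib matrix_vector_mult_diff_distrib
    by simp
  show "sym_mat (A0 ** (Jm - J ** J))"
  proof (rule form_sym)
    fix x y :: "real^'n"
    have 1: "x \<bullet> (A0 *v (Jm *v y)) = y \<bullet> (A0 *v (Jm *v x))"
      unfolding Jmy inner_sum_right inner_scaleR_right
      by (intro sum.cong refl) (simp add: sym_form[OF symS])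
    have 2: "x \<bullet> (T *v (J *v y)) = y \<bullet> (T *v (J *v x))"
    proof -
      have "x \<bullet> (T *v (J *v y)) = (J *v y) \<bullet> (T *v x)" by (rule sym_form[OF symT])
      also have "\<dots> = (J *v y) \<bullet> (A0 *v (J *v x))" by (simp add: T_def matrix_vector_mul_assoc)
      also have "\<dots> = (J *v x) \<bullet> (A0 *v (J *v y))" by (rule sym_form[OF symA])
      also have "\<dots> = (J *v x) \<bullet> (T *v y)" by (simp add: T_def matrix_vector_mul_assoc)
      also have "\<dots> = y \<bullet> (T *v (J *v x))" by (rule sym_form[OF symT])
      finally show ?thesis .
    qed
    show "x \<bullet> (A0 ** (Jm - J ** J) *v y) = y \<bullet> (A0 ** (Jm - J ** J) *v x)"
      unfolding SS inner_diff_right using 1 2 by simp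
  qed
  have quad: "x \<bullet> ((A0 ** (Jm - J ** J)) *v x) = (\<Sum>i<k. (a i *\<^sub>R x - J *v x) \<bullet> (S i *v (a i *\<^sub>R x - J *v x)))" for x
  proof -
    define y where "y = J *v x"
    have tm: "(a i *\<^sub>R x - y) \<bullet> (S i *v (a i *\<^sub>R x - y)) =
       (a i)\<^sup>2 * (x \<bullet> (S i *v x)) - 2 * (a i * (x \<bullet> (S i *v y))) + y \<bullet> (S i *v y)" if "i < k" for i
      using sym_form[OF symS[OF that], of x y]
      by (simp add: algebra_simps inner_diff_left inner_diff_right power2_eq_square)
    have "(\<Sum>i<k. (a i *\<^sub>R x - y) \<bullet> (S i *v (a i *\<^sub>R x - y))) =
       (\<Sum>i<k. (a i)\<^sup>2 * (x \<bullet> (S i *v x))) - 2 * (\<Sum>i<k. a i * (x \<bullet> (S i *v y))) + (\<Sum>i<k. y \<bullet> (S i *v y))"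
      by (simp add: tm sum.distrib sum_subtractf sum_distrib_left)
    also have "(\<Sum>i<k. (a i)\<^sup>2 * (x \<bullet> (S i *v x))) = x \<bullet> (A0 *v (Jm *v x))"
      by (simp add: Jmy inner_sum_right)
    also have "(\<Sum>i<k. a i * (x \<bullet> (S i *v y))) = x \<bullet> (T *v y)"
      by (simp add: Ty inner_sum_right)
    also have "(\<Sum>i<k. y \<bullet> (S i *v y)) = x \<bullet> (T *v y)"
    proof -
      have "(\<Sum>i<k. y \<bullet> (S i *v y)) = y \<bullet> (A0 *v y)" by (simp add: A0y inner_sum_right)
      also have "\<dots> = y \<bullet> (T *v x)" by (simp add: y_def T_def matrix_vector_mul_assoc)
      also have "\<dots> = x \<bullet> (T *v y)" by (rule sym_form[OF symT])
      finally show ?thesis .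
    qed
    finally show ?thesis by (simp add: SS y_def inner_diff_right)
  qed
  show "x \<bullet> ((A0 ** (Jm - J ** J)) *v x) > 0" if x: "x \<noteq> 0" for x
  proof -
    have nn: "\<And>i. i \<in> {..<k} \<Longrightarrow> 0 \<le> (a i *\<^sub>R x - J *v x) \<bullet> (S i *v (a i *\<^sub>R x - J *v x))"
      using pdS by (metis inner_zero_left lessThan_iff less_eq_real_def)
    have "x \<bullet> ((A0 ** (Jm - J ** J)) *v x) \<noteq> 0"
    proof
      assume "x \<bullet> ((A0 ** (Jm - J ** J)) *v x) = 0"
      then have "\<forall>i\<in>{..<k}. (a i *\<^sub>R x - J *v x) \<bullet> (S i *v (a i *\<^sub>R x - J *v x)) = 0"
        using quad sum_nonneg_eq_0_iff[OF finite_lessThan nn] by simp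
      then have "(a 0 *\<^sub>R x - J *v x) \<bullet> (S 0 *v (a 0 *\<^sub>R x - J *v x)) = 0" using k by auto
      then have "a 0 *\<^sub>R x - J *v x = 0"
      proof (rule contrapos_pp)
        assume ne: "a 0 *\<^sub>R x - J *v x \<noteq> 0"
        have k0: "0 < k" using k by simp
        from pdS[OF k0 ne] show "(a 0 *\<^sub>R x - J *v x) \<bullet> (S 0 *v (a 0 *\<^sub>R x - J *v x)) \<noteq> 0" by simp
      qed
      then have "J *v x = a 0 *\<^sub>R x" by simp
      then have "is_eigenvalue J (complex_of_real (a 0))" using real_eig x by blast
      from le_spec[OF this] have "\<bar>a 0\<bar> \<le> spectral_radius J" by simp
      moreover have "Min ((\<lambda>i. \<bar>a i\<bar>) ` {..<k}) \<le> \<bar>a 0\<bar>" using k by (intro Min_le) auto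
      ultimately show False using sub by simp
    qed
    moreover have "x \<bullet> ((A0 ** (Jm - J ** J)) *v x) \<ge> 0" unfolding quad by (rule sum_nonneg) (rule nn)
    ultimately show ?thesis by simp
  qed
qed


theorem corollary2:
  fixes k :: nat
    and a :: "nat \<Rightarrow> real"
    and f :: "real^'p \<Rightarrow> real^'p"
    and M :: "nat \<Rightarrow> real^'p \<Rightarrow> real^'p"
    and u :: "real^'p"
    and eta :: "real^'p \<Rightarrow> real"
    and A0 D OmInv :: "real^'p^'p"
    and \<epsilon> \<omega> :: real
  defines "m2 \<equiv> (\<lambda>v. \<Sum>i<k. (a i)\<^sup>2 *\<^sub>R M i v)"
  assumes k_pos: "k \<ge> 1"
    and f_diff: "\<And>v. f differentiable (at v)"
    and M_diff: "\<And>i v. i < k \<Longrightarrow> M i differentiable (at v)"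
    and M_sum: "\<And>v. (\<Sum>i<k. M i v) = v"
    and M_flux: "\<And>v. (\<Sum>i<k. a i *\<^sub>R M i v) = f v"
    and eta_convex: "strictly_convex_on UNIV eta"
    and eta_diff: "\<And>v. eta differentiable (at v)"
    and eta_twice: "gradient_vec eta differentiable (at u)"
    and A0_def: "A0 = hessian eta u"
    and A0_inv: "invertible A0"
    and sym_f: "sym_mat (A0 ** jacobian f (at u))"
    and pd_M: "\<And>i. i < k \<Longrightarrow> pos_def_sym (A0 ** jacobian (M i) (at u))"
    and subchar: "Min ((\<lambda>i. \<bar>a i\<bar>) ` {..<k}) > spectral_radius (jacobian f (at u))"
    and D_sym: "sym_mat (D ** matrix_inv A0)"
    and D_pos: "\<And>lam. is_eigenvalue (D ** matrix_inv A0) lam \<Longrightarrow> Im lam = 0 \<and> Re lam > 0"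
    and eps_pos: "\<epsilon> > 0"
    and omega_pos: "\<omega> > 0"
    and Omega_def: "(\<epsilon> * \<omega>) *\<^sub>R OmInv =
        D ** matrix_inv (jacobian m2 (at u) - jacobian f (at u) ** jacobian f (at u))"
  shows "\<forall>lam. is_eigenvalue (\<epsilon> *\<^sub>R OmInv) lam \<longrightarrow> Im lam = 0 \<and> Re lam \<ge> 0"
proof -
  define J where "J = jacobian f (at u)"
  define Ji where "Ji i = jacobian (M i) (at u)" for i
  define Jm where "Jm = jacobian m2 (at u)"
  have Md: "\<And>i. i < k \<Longrightarrow> M i differentiable (at u)" using M_diff by blast
  have I: "(\<Sum>i<k. Ji i) = mat 1"
  proof -
    have e: "(\<lambda>v. \<Sum>i<k. (1::real) *\<^sub>R M i v) = (\<lambda>v. v)" using M_sum by simp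
    have "jacobian (\<lambda>v::real^'p. v) (at u) = mat 1"
      by (rule jac_eq) (simp add: matrix_vector_mul_lid has_derivative_ident)
    then show ?thesis using jac_sum[of k M u "\<lambda>_. 1", OF Md] unfolding e Ji_def by simp
  qed
  have Jf: "J = (\<Sum>i<k. a i *\<^sub>R Ji i)"
  proof -
    have "f = (\<lambda>v. \<Sum>i<k. a i *\<^sub>R M i v)" using M_flux by (simp add: fun_eq_iff)
    then show ?thesis unfolding J_def Ji_def using jac_sum[of k M u a, OF Md] by simp
  qed
  have Jm: "Jm = (\<Sum>i<k. (a i)\<^sup>2 *\<^sub>R Ji i)"
    unfolding Jm_def Ji_def m2_def using jac_sum[of k M u "\<lambda>i. (a i)\<^sup>2", OF Md] by simp
  define B where "B = Jm - J ** J"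
  define S where "S = A0 ** B"
  have pdi: "\<And>i. i < k \<Longrightarrow> pos_def_sym (A0 ** Ji i)" using pd_M Ji_def by simp
  note c = core[OF k_pos I Jf Jm sym_f[folded J_def] pdi subchar[folded J_def]]
  have symA: "sym_mat A0" by (rule c(1))
  have symS: "sym_mat S" unfolding S_def B_def by (rule c(2))
  have pdS: "\<And>x. x \<noteq> 0 \<Longrightarrow> x \<bullet> (S *v x) > 0" unfolding S_def B_def by (rule c(3))
  have Binv: "invertible B"
  proof -
    have "\<forall>x. B *v x = 0 \<longrightarrow> x = 0"
    proof (intro allI impI)
      fix x assume "B *v x = 0"
      then have "S *v x = 0" by (simp add: S_def matrix_vector_mul_assoc[symmetric])
      then show "x = 0" using pdS by fastforce
    qed
    then show ?thesis using invertible_left_inverse matrix_left_invertible_ker by blast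
  qed
  define Bi where "Bi = matrix_inv B"
  have BBi: "B ** Bi = mat 1" using minv[OF Binv] Bi_def by simp
  have BBiv: "B *v (Bi *v x) = x" for x using BBi by (simp add: matrix_vector_mul_assoc)
  define Q where "Q = A0 ** Bi"
  have Qv: "Q *v x = A0 *v (Bi *v x)" for x by (simp add: Q_def matrix_vector_mul_assoc)
  have SB: "S *v z = A0 *v (B *v z)" for z by (simp add: S_def matrix_vector_mul_assoc)
  have pdQ: "x \<bullet> (Q *v x) > 0" if x: "x \<noteq> 0" for x
  proof -
    define z where "z = Bi *v x"
    have xz: "x = B *v z" using BBiv z_def by simp
    have "z \<noteq> 0" using x xz by auto
    then have "z \<bullet> (S *v z) > 0" by (rule pdS)
    also have "z \<bullet> (S *v z) = x \<bullet> (Q *v x)"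
      by (simp add: SB Qv z_def[symmetric] xz[symmetric] sym_form[OF symA])
    finally show ?thesis .
  qed
  have symQ: "sym_mat Q"
  proof (rule form_sym)
    fix x y :: "real^'p"
    define z where "z = Bi *v x"
    define w where "w = Bi *v y"
    have xz: "x = B *v z" using BBiv z_def by simp
    have yw: "y = B *v w" using BBiv w_def by simp
    have "x \<bullet> (Q *v y) = w \<bullet> (S *v z)"
      by (simp add: Qv w_def[symmetric] SB xz[symmetric] sym_form[OF symA])
    also have "\<dots> = z \<bullet> (S *v w)" by (rule sym_form[OF symS])
    also have "\<dots> = y \<bullet> (Q *v x)"
      by (simp add: Qv z_def[symmetric] SB yw[symmetric] sym_form[OF symA])
    finally show "x \<bullet> (Q *v y) = y \<bullet> (Q *v x)" .
  qed
  define P where "P = D ** matrix_inv A0"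
  have symP: "sym_mat P" using D_sym P_def by simp
  have psdP: "x \<bullet> (P *v x) \<ge> 0" for x
  proof (cases "x = 0")
    case False
    then show ?thesis using sym_pos_eig_pd[OF symP _ False] D_pos P_def less_imp_le by blast
  qed simp
  have PQ: "P ** Q = D ** Bi"
  proof -
    have "P ** Q = D ** (matrix_inv A0 ** A0) ** Bi" by (simp add: P_def Q_def matrix_mul_assoc)
    also have "\<dots> = D ** Bi" using minv[OF A0_inv] by simp
    finally show ?thesis .
  qed
  have om: "\<epsilon> *\<^sub>R OmInv = (1 / \<omega>) *\<^sub>R (P ** Q)"
  proof -
    have "\<epsilon> *\<^sub>R OmInv = (1 / \<omega>) *\<^sub>R ((\<epsilon> * \<omega>) *\<^sub>R OmInv)" using omega_pos by simp
    also have "(\<epsilon> * \<omega>) *\<^sub>R OmInv = P ** Q"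
      using Omega_def by (simp add: PQ Bi_def B_def Jm_def J_def)
    finally show ?thesis .
  qed
  have peig: "\<And>\<mu>. is_eigenvalue (P ** Q) \<mu> \<Longrightarrow> Im \<mu> = 0 \<and> Re \<mu> \<ge> 0"
    using pdpd_eig[OF symP psdP symQ pdQ] by blast
  show ?thesis
  proof (intro allI impI)
    fix lam assume "is_eigenvalue (\<epsilon> *\<^sub>R OmInv) lam"
    then have "is_eigenvalue ((1 / \<omega>) *\<^sub>R (P ** Q)) lam" by (simp add: om)
    then have "is_eigenvalue (P ** Q) (lam / complex_of_real (1 / \<omega>))"
      using omega_pos by (intro eig_scale) auto
    then have mu: "Im (lam / complex_of_real (1 / \<omega>)) = 0 \<and> Re (lam / complex_of_real (1 / \<omega>)) \<ge> 0"
      by (rule peig)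
    have "lam / complex_of_real (1 / \<omega>) = lam * complex_of_real \<omega>" by simp
    then show "Im lam = 0 \<and> Re lam \<ge> 0" using mu omega_pos
      by (simp add: zero_le_mult_iff)
  qed
qed

end
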